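(* Let $A$ be a nonzero ring and $X$ a simplicial set. The following are equivalent: (i) for every simplex $\sigma\in X$ there exists $\phi\in A^{(X)}$ with $\phi(\sigma)\neq0$; (ii) $X$ is locally finite.
   Context: For a ring $A$, $A^{\Delta^n}=A\otimes\mathbb Z[t_0,\dots,t_n]/(t_0+\dots+t_n-1)$, forming a simplicial ring $A^{\Delta^\bullet}$; $A^X=\hom_{\mathrm{sSet}}(X,A^{\Delta^\bullet})$ with pointwise ring structure. The support of $\phi\in A^X$ is the simplicial subset generated by $\{\sigma\in X:\phi(\sigma)\neq0\}$, and $A^{(X)}$ is the set of $\phi$ with finite support (finitely many nondegenerate simplices). A simplicial set $X$ is locally finite if for every simplex $\sigma$ the set of nondegenerate simplices $\tau$ with $\langle\tau\rangle\supset\langle\sigma\rangle$ is finite, where $\langle\sigma\rangle$ is the simplicial subset generated by $\sigma$. *)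

theory Defs
  imports "HOL-Library.Poly_Mapping"
begin

text \<open>A morphism [m] -> [n] of the simplex category: a monotone map {0..m} -> {0..n}
  (represented by a function nat => nat; only its values on {0..m} matter).\<close>
definition dmap :: "nat \<Rightarrow> nat \<Rightarrow> (nat \<Rightarrow> nat) \<Rightarrow> bool" where
  "dmap m n \<theta> \<longleftrightarrow> (\<forall>i\<le>m. \<theta> i \<le> n) \<and> (\<forall>i j. i \<le> j \<longrightarrow> j \<le> m \<longrightarrow> \<theta> i \<le> \<theta> j)"

text \<open>A simplicial set: sets of n-simplices X n, and for each theta : [m] -> [n]
  the induced map  act n m theta : X n -> X m, functorially (contravariant).\<close>
definition simplicial_set ::
  "(nat \<Rightarrow> 'x set) \<Rightarrow> (nat \<Rightarrow> nat \<Rightarrow> (nat \<Rightarrow> nat) \<Rightarrow> 'x \<Rightarrow> 'x) \<Rightarrow> bool" where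
  "simplicial_set X act \<longleftrightarrow>
     (\<forall>m n \<theta> \<sigma>. dmap m n \<theta> \<longrightarrow> \<sigma> \<in> X n \<longrightarrow> act n m \<theta> \<sigma> \<in> X m) \<and>
     (\<forall>m n \<theta> \<theta>' \<sigma>. (\<forall>i\<le>m. \<theta> i = \<theta>' i) \<longrightarrow> act n m \<theta> \<sigma> = act n m \<theta>' \<sigma>) \<and>
     (\<forall>n \<sigma>. \<sigma> \<in> X n \<longrightarrow> act n n id \<sigma> = \<sigma>) \<and>
     (\<forall>l m n \<theta> \<psi> \<sigma>. dmap m n \<theta> \<longrightarrow> dmap l m \<psi> \<longrightarrow> \<sigma> \<in> X n \<longrightarrow>
        act m l \<psi> (act n m \<theta> \<sigma>) = act n l (\<theta> \<circ> \<psi>) \<sigma>)"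

definition simplices :: "(nat \<Rightarrow> 'x set) \<Rightarrow> (nat \<times> 'x) set" where
  "simplices X = {(n, \<sigma>). \<sigma> \<in> X n}"

definition generated ::
  "(nat \<Rightarrow> nat \<Rightarrow> (nat \<Rightarrow> nat) \<Rightarrow> 'x \<Rightarrow> 'x) \<Rightarrow> (nat \<times> 'x) set \<Rightarrow> (nat \<times> 'x) set" where
  "generated act S = {(m, act n m \<theta> \<tau>) | m n \<theta> \<tau>. (n, \<tau>) \<in> S \<and> dmap m n \<theta>}"

definition nondegenerate ::
  "(nat \<Rightarrow> 'x set) \<Rightarrow> (nat \<Rightarrow> nat \<Rightarrow> (nat \<Rightarrow> nat) \<Rightarrow> 'x \<Rightarrow> 'x) \<Rightarrow> nat \<times> 'x \<Rightarrow> bool" where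
  "nondegenerate X act s \<longleftrightarrow> (case s of (n, \<sigma>) \<Rightarrow>
     \<sigma> \<in> X n \<and> \<not> (\<exists>k \<theta> \<tau>. k < n \<and> dmap n k \<theta> \<and> \<tau> \<in> X k \<and> \<sigma> = act k n \<theta> \<tau>))"

definition locally_finite ::
  "(nat \<Rightarrow> 'x set) \<Rightarrow> (nat \<Rightarrow> nat \<Rightarrow> (nat \<Rightarrow> nat) \<Rightarrow> 'x \<Rightarrow> 'x) \<Rightarrow> bool" where
  "locally_finite X act \<longleftrightarrow> (\<forall>s \<in> simplices X.
     finite {t. nondegenerate X act t \<and> generated act {s} \<subseteq> generated act {t}})"

text \<open>Polynomials over A in the variables t_0, t_1, ... (finitely supported).\<close>
type_synonym 'a pol = "(nat \<Rightarrow>\<^sub>0 nat) \<Rightarrow>\<^sub>0 'a"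

definition var :: "nat \<Rightarrow> 'a::comm_ring_1 pol" where
  "var i = Poly_Mapping.single (Poly_Mapping.single i 1) 1"

definition vars_le :: "nat \<Rightarrow> 'a::comm_ring_1 pol \<Rightarrow> bool" where
  "vars_le n p \<longleftrightarrow> (\<forall>mon::nat \<Rightarrow>\<^sub>0 nat. mon \<in> Poly_Mapping.keys p \<longrightarrow> Poly_Mapping.keys mon \<subseteq> {0..n})"

definition subst :: "(nat \<Rightarrow> 'a::comm_ring_1 pol) \<Rightarrow> 'a pol \<Rightarrow> 'a pol" where
  "subst f p = (\<Sum>mon::nat \<Rightarrow>\<^sub>0 nat \<in> Poly_Mapping.keys p.
                   Poly_Mapping.single 0 (Poly_Mapping.lookup p mon) *
                   (\<Prod>i::nat \<in> Poly_Mapping.keys mon. f i ^ Poly_Mapping.lookup mon i))"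

text \<open>The relation t_0 + ... + t_n - 1 defining A^{Delta^n}.\<close>
definition simplex_rel :: "nat \<Rightarrow> 'a::comm_ring_1 pol" where
  "simplex_rel n = (\<Sum>i\<le>n. var i) - 1"

text \<open>Equality in A^{Delta^n} = A[t_0..t_n]/(t_0+...+t_n-1) of representatives.\<close>
definition eq_Delta :: "nat \<Rightarrow> 'a::comm_ring_1 pol \<Rightarrow> 'a pol \<Rightarrow> bool" where
  "eq_Delta n p q \<longleftrightarrow> (\<exists>r. vars_le n r \<and> p - q = r * simplex_rel n)"

text \<open>The map A^{Delta^n} -> A^{Delta^m} induced by theta : [m] -> [n]:
  t_i |-> sum of t_j over j <= m with theta j = i.\<close>
definition pull :: "nat \<Rightarrow> (nat \<Rightarrow> nat) \<Rightarrow> 'a::comm_ring_1 pol \<Rightarrow> 'a pol" where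
  "pull m \<theta> p = subst (\<lambda>i. \<Sum>j \<in> {j. j \<le> m \<and> \<theta> j = i}. var j) p"

text \<open>A simplicial map phi : X -> A^{Delta^\<bullet>}, given by representatives phi n sigma
  in A[t_0..t_n] of its values in A^{Delta^n}.\<close>
definition sset_map_Delta ::
  "(nat \<Rightarrow> 'x set) \<Rightarrow> (nat \<Rightarrow> nat \<Rightarrow> (nat \<Rightarrow> nat) \<Rightarrow> 'x \<Rightarrow> 'x) \<Rightarrow> (nat \<Rightarrow> 'x \<Rightarrow> 'a::comm_ring_1 pol) \<Rightarrow> bool" where
  "sset_map_Delta X act \<phi> \<longleftrightarrow>
     (\<forall>n \<sigma>. \<sigma> \<in> X n \<longrightarrow> vars_le n (\<phi> n \<sigma>)) \<and>
     (\<forall>m n \<theta> \<sigma>. dmap m n \<theta> \<longrightarrow> \<sigma> \<in> X n \<longrightarrow>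
        eq_Delta m (\<phi> m (act n m \<theta> \<sigma>)) (pull m \<theta> (\<phi> n \<sigma>)))"

definition support ::
  "(nat \<Rightarrow> 'x set) \<Rightarrow> (nat \<Rightarrow> nat \<Rightarrow> (nat \<Rightarrow> nat) \<Rightarrow> 'x \<Rightarrow> 'x) \<Rightarrow> (nat \<Rightarrow> 'x \<Rightarrow> 'a::comm_ring_1 pol) \<Rightarrow> (nat \<times> 'x) set" where
  "support X act \<phi> = generated act {(n, \<sigma>). \<sigma> \<in> X n \<and> \<not> eq_Delta n (\<phi> n \<sigma>) 0}"

text \<open>Elements of A^{(X)}: simplicial maps with finite support (finitely many
  nondegenerate simplices).\<close>
definition fin_supp_cochain ::
  "(nat \<Rightarrow> 'x set) \<Rightarrow> (nat \<Rightarrow> nat \<Rightarrow> (nat \<Rightarrow> nat) \<Rightarrow> 'x \<Rightarrow> 'x) \<Rightarrow> (nat \<Rightarrow> 'x \<Rightarrow> 'a::comm_ring_1 pol) \<Rightarrow> bool" where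
  "fin_supp_cochain X act \<phi> \<longleftrightarrow> sset_map_Delta X act \<phi> \<and>
     finite {s \<in> support X act \<phi>. nondegenerate X act s}"

end

theory Submission imports Defs begin

definition Mon :: "(nat \<Rightarrow> 'a::comm_ring_1 pol) \<Rightarrow> (nat \<Rightarrow>\<^sub>0 nat) \<Rightarrow> 'a pol" where
  "Mon f mon = (\<Prod>i \<in> Poly_Mapping.keys mon. f i ^ Poly_Mapping.lookup mon i)"

abbreviation C :: "'a::comm_ring_1 \<Rightarrow> 'a pol" where "C c \<equiv> Poly_Mapping.single 0 c"

lemma Mon_superset:
  assumes "finite S" "Poly_Mapping.keys mon \<subseteq> S"
  shows "Mon f mon = (\<Prod>i \<in> S. f i ^ Poly_Mapping.lookup mon i)"
  unfolding Mon_def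
  by (rule prod.mono_neutral_left) (use assms in \<open>auto simp: in_keys_iff\<close>)

lemma Mon_add: "Mon f (a + b) = Mon f a * Mon f b"
proof -
  let ?S = "Poly_Mapping.keys a \<union> Poly_Mapping.keys b"
  have "Mon f (a + b) = (\<Prod>i \<in> ?S. f i ^ Poly_Mapping.lookup (a+b) i)"
    by (rule Mon_superset) (auto dest: keys_add[THEN subsetD])
  also have "\<dots> = (\<Prod>i \<in> ?S. f i ^ Poly_Mapping.lookup a i) * (\<Prod>i \<in> ?S. f i ^ Poly_Mapping.lookup b i)"
    by (simp add: lookup_add power_add prod.distrib)
  also have "\<dots> = Mon f a * Mon f b"
    by (simp add: Mon_superset[symmetric])
  finally show ?thesis .
qed

lemma Mon_zero[simp]: "Mon f 0 = 1" by (simp add: Mon_def)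

lemma subst_Mon: "subst f p = (\<Sum>mon \<in> Poly_Mapping.keys p. C (Poly_Mapping.lookup p mon) * Mon f mon)"
  by (simp add: subst_def Mon_def)

lemma subst_superset:
  assumes "finite S" "Poly_Mapping.keys p \<subseteq> S"
  shows "subst f p = (\<Sum>mon \<in> S. C (Poly_Mapping.lookup p mon) * Mon f mon)"
  unfolding subst_Mon
  by (rule sum.mono_neutral_left) (use assms in \<open>auto simp: in_keys_iff\<close>)

lemma subst_add: "subst f (p + q) = subst f p + subst f q"
proof -
  let ?S = "Poly_Mapping.keys p \<union> Poly_Mapping.keys q"
  have "subst f (p + q) = (\<Sum>mon \<in> ?S. C (Poly_Mapping.lookup (p+q) mon) * Mon f mon)"
    by (rule subst_superset) (auto dest: keys_add[THEN subsetD])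
  also have "\<dots> = (\<Sum>mon \<in> ?S. C (Poly_Mapping.lookup p mon) * Mon f mon) + (\<Sum>mon \<in> ?S. C (Poly_Mapping.lookup q mon) * Mon f mon)"
    by (simp add: lookup_add single_add distrib_right sum.distrib)
  also have "\<dots> = subst f p + subst f q"
    by (simp add: subst_superset[symmetric])
  finally show ?thesis .
qed

lemma subst_zero[simp]: "subst f 0 = 0" by (simp add: subst_def)

lemma subst_minus: "subst f (p - q) = subst f p - subst f q"
  using subst_add[of f "p - q" q] by (simp add: eq_diff_eq)

lemma subst_sum: "subst f (sum g A) = (\<Sum>a\<in>A. subst f (g a))"
  by (induction A rule: infinite_finite_induct) (auto simp: subst_add)

lemma subst_single: "subst f (Poly_Mapping.single a c) = C c * Mon f a"
  by (subst subst_superset[of "{a}"]) auto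

lemma pm_repr: "p = (\<Sum>a \<in> Poly_Mapping.keys p. Poly_Mapping.single a (Poly_Mapping.lookup p a))"
  by (rule poly_mapping_eqI) (auto simp: lookup_sum lookup_single when_def in_keys_iff)

lemma subst_mult: "subst f (p * q) = subst f p * subst f q"
proof -
  have "p * q = (\<Sum>a \<in> Poly_Mapping.keys p. \<Sum>b \<in> Poly_Mapping.keys q.
           Poly_Mapping.single a (Poly_Mapping.lookup p a) * Poly_Mapping.single b (Poly_Mapping.lookup q b))"
    by (subst (1) pm_repr, subst (2) pm_repr) (simp add: sum_product)
  hence "subst f (p * q) = (\<Sum>a \<in> Poly_Mapping.keys p. \<Sum>b \<in> Poly_Mapping.keys q.
           (C (Poly_Mapping.lookup p a) * Mon f a) * (C (Poly_Mapping.lookup q b) * Mon f b))"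
    by (simp add: subst_sum mult_single subst_single Mon_add mult_ac)
  also have "\<dots> = subst f p * subst f q"
    by (simp add: subst_Mon sum_product)
  finally show ?thesis .
qed

lemma subst_one[simp]: "subst f 1 = 1"
  using subst_single[of f 0 1] by simp

lemma subst_var[simp]: "subst f (var i) = f i"
  by (simp add: var_def subst_single Mon_def)

lemma subst_prod: "subst f (prod g A) = (\<Prod>a\<in>A. subst f (g a))"
  by (induction A rule: infinite_finite_induct) (auto simp: subst_mult)

lemma subst_power: "subst f (p ^ k) = subst f p ^ k"
  by (induction k) (auto simp: subst_mult)

lemma vars_le_zero[simp]: "vars_le n 0" by (simp add: vars_le_def)
lemma vars_le_add: "vars_le n p \<Longrightarrow> vars_le n q \<Longrightarrow> vars_le n (p + q)"
  unfolding vars_le_def by (meson Un_iff keys_add subsetD)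
lemma vars_le_diff: "vars_le n p \<Longrightarrow> vars_le n q \<Longrightarrow> vars_le n (p - q)"
  unfolding vars_le_def by (meson Un_iff keys_diff subsetD)
lemma vars_le_mult: "vars_le n p \<Longrightarrow> vars_le n q \<Longrightarrow> vars_le n (p * q)"
  unfolding vars_le_def
proof (intro allI impI)
  fix mon :: "nat \<Rightarrow>\<^sub>0 nat"
  assume p: "\<forall>mon. mon \<in> Poly_Mapping.keys p \<longrightarrow> Poly_Mapping.keys mon \<subseteq> {0..n}"
    and q: "\<forall>mon. mon \<in> Poly_Mapping.keys q \<longrightarrow> Poly_Mapping.keys mon \<subseteq> {0..n}"
    and m: "mon \<in> Poly_Mapping.keys (p * q)"
  then obtain a b where "mon = a + b" "a \<in> Poly_Mapping.keys p" "b \<in> Poly_Mapping.keys q"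
    using keys_mult by blast
  thus "Poly_Mapping.keys mon \<subseteq> {0..n}" using p q keys_add[of a b] by (meson Un_least order_trans)
qed
lemma vars_le_one[simp]: "vars_le n 1" by (simp add: vars_le_def)
lemma vars_le_C[simp]: "vars_le n (C c)" by (simp add: vars_le_def)
lemma vars_le_var: "i \<le> n \<Longrightarrow> vars_le n (var i)" by (simp add: vars_le_def var_def)
lemma vars_le_sum: "(\<And>a. a \<in> A \<Longrightarrow> vars_le n (g a)) \<Longrightarrow> vars_le n (sum g A)"
  by (induction A rule: infinite_finite_induct) (auto intro: vars_le_add)
lemma vars_le_prod: "(\<And>a. a \<in> A \<Longrightarrow> vars_le n (g a)) \<Longrightarrow> vars_le n (prod g A)"
  by (induction A rule: infinite_finite_induct) (auto intro: vars_le_mult)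
lemma vars_le_power: "vars_le n p \<Longrightarrow> vars_le n (p ^ k)"
  by (induction k) (auto intro: vars_le_mult)
lemma vars_le_subst: "(\<And>i. vars_le n (f i)) \<Longrightarrow> vars_le n (subst f p)"
  unfolding subst_def
  by (intro vars_le_sum vars_le_mult vars_le_prod vars_le_power) auto


lemma dmap_id: "dmap n n id" by (simp add: dmap_def)
lemma dmap_comp: "dmap m n \<theta> \<Longrightarrow> dmap l m \<psi> \<Longrightarrow> dmap l n (\<theta> \<circ> \<psi>)"
  unfolding dmap_def by auto
lemma dmap_const: "j \<le> m \<Longrightarrow> dmap l m (\<lambda>_. j)" by (simp add: dmap_def)

lemma pull_subst: "pull m \<theta> = subst (\<lambda>i. \<Sum>j \<in> {j. j \<le> m \<and> \<theta> j = i}. var j)"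
  by (simp add: pull_def fun_eq_iff)

lemma vars_le_pull: "vars_le m (pull m \<theta> p)"
  unfolding pull_subst by (intro vars_le_subst vars_le_sum vars_le_var) auto

lemma pull_rel:
  assumes "dmap m k \<theta>"
  shows "pull m \<theta> (simplex_rel k) = (simplex_rel m :: 'a::comm_ring_1 pol)"
proof -
  have "(\<Sum>i\<le>k. \<Sum>j \<in> {j. j \<le> m \<and> \<theta> j = i}. (var j :: 'a pol)) = (\<Sum>i\<in>{..k}. \<Sum>j \<in> {x. x \<in> {..m} \<and> \<theta> x = i}. var j)"
    by simp
  also have "\<dots> = (\<Sum>j\<le>m. var j)"
    by (rule sum.group) (use assms in \<open>auto simp: dmap_def\<close>)
  finally show ?thesis
    by (simp add: pull_subst simplex_rel_def subst_minus subst_sum)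
qed

lemma eq_Delta_pull_zero:
  assumes "dmap n k \<theta>" "eq_Delta k p (0::'a::comm_ring_1 pol)"
  shows "eq_Delta n (pull n \<theta> p) 0"
proof -
  obtain r where r: "vars_le k r" "p = r * simplex_rel k" using assms(2) by (auto simp: eq_Delta_def)
  have m: "pull n \<theta> (r * simplex_rel k) = pull n \<theta> r * pull n \<theta> (simplex_rel k)"
    unfolding pull_subst by (rule subst_mult)
  have "pull n \<theta> p = pull n \<theta> r * simplex_rel n"
    using r(2) m pull_rel[OF assms(1), where 'a='a] by simp
  thus ?thesis unfolding eq_Delta_def using vars_le_pull by auto
qed

lemma eq_Delta_trans_zero:
  assumes "eq_Delta n a b" "eq_Delta n b (0::'a::comm_ring_1 pol)"
  shows "eq_Delta n a 0"
proof -
  obtain r1 r2 where "vars_le n r1" "a - b = r1 * simplex_rel n" "vars_le n r2" "b = r2 * simplex_rel n"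
    using assms by (auto simp: eq_Delta_def)
  hence "vars_le n (r1 + r2)" "a - 0 = (r1 + r2) * simplex_rel n"
    by (auto intro: vars_le_add simp: algebra_simps eq_diff_eq)
  thus ?thesis unfolding eq_Delta_def by blast
qed

lemma EZ:
  assumes ss: "simplicial_set X act"
  shows "\<sigma> \<in> X n \<Longrightarrow> \<exists>k \<psi> \<tau>. dmap n k \<psi> \<and> nondegenerate X act (k, \<tau>) \<and> \<sigma> = act k n \<psi> \<tau>"
proof (induction n arbitrary: \<sigma> rule: less_induct)
  case (less n)
  show ?case
  proof (cases "nondegenerate X act (n, \<sigma>)")
    case True
    then show ?thesis using dmap_id ss less.prems unfolding simplicial_set_def by metis
  next
    case False
    then obtain k \<theta> \<tau> where k: "k < n" "dmap n k \<theta>" "\<tau> \<in> X k" "\<sigma> = act k n \<theta> \<tau>"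
      using less.prems by (auto simp: nondegenerate_def)
    then obtain k' \<psi> \<tau>' where k': "dmap k k' \<psi>" "nondegenerate X act (k', \<tau>')" "\<tau> = act k' k \<psi> \<tau>'"
      using less.IH by blast
    have "\<tau>' \<in> X k'" using k'(2) by (simp add: nondegenerate_def)
    hence "\<sigma> = act k' n (\<psi> \<circ> \<theta>) \<tau>'" using ss k k' unfolding simplicial_set_def by metis
    thus ?thesis using k' k dmap_comp by blast
  qed
qed


lemma ss_act_id: "simplicial_set X act \<Longrightarrow> \<sigma> \<in> X n \<Longrightarrow> act n n id \<sigma> = \<sigma>"
  unfolding simplicial_set_def by blast

lemma gen_self:
  assumes "simplicial_set X act" "\<sigma> \<in> X n"
  shows "(n, \<sigma>) \<in> generated act {(n, \<sigma>)}"
proof -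
  have "(n, act n n id \<sigma>) \<in> generated act {(n, \<sigma>)}"
    unfolding generated_def using dmap_id by blast
  thus ?thesis using ss_act_id[OF assms] by simp
qed

lemma dir1:
  assumes ss: "simplicial_set X act"
    and H: "\<forall>n \<sigma>. \<sigma> \<in> X n \<longrightarrow>
            (\<exists>\<phi> :: nat \<Rightarrow> 'x \<Rightarrow> 'a::comm_ring_1 pol.
               fin_supp_cochain X act \<phi> \<and> \<not> eq_Delta n (\<phi> n \<sigma>) 0)"
  shows "locally_finite X act"
  unfolding locally_finite_def
proof
  fix s assume "s \<in> simplices X"
  then obtain n \<sigma> where s: "s = (n, \<sigma>)" "\<sigma> \<in> X n" by (auto simp: simplices_def)
  obtain \<phi> :: "nat \<Rightarrow> 'x \<Rightarrow> 'a pol" where \<phi>: "fin_supp_cochain X act \<phi>" "\<not> eq_Delta n (\<phi> n \<sigma>) 0"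
    using H s by blast
  have sm: "sset_map_Delta X act \<phi>" using \<phi>(1) by (simp add: fin_supp_cochain_def)
  have "{t. nondegenerate X act t \<and> generated act {s} \<subseteq> generated act {t}}
        \<subseteq> {t \<in> support X act \<phi>. nondegenerate X act t}"
  proof safe
    fix k \<tau> assume nd: "nondegenerate X act (k, \<tau>)" and sub: "generated act {s} \<subseteq> generated act {(k, \<tau>)}"
    have \<tau>X: "\<tau> \<in> X k" using nd by (simp add: nondegenerate_def)
    have "(n, \<sigma>) \<in> generated act {(k, \<tau>)}"
      using sub s gen_self[OF ss s(2)] by blast
    then obtain \<theta> where th: "dmap n k \<theta>" "\<sigma> = act k n \<theta> \<tau>"
      unfolding generated_def by blast
    have "\<not> eq_Delta k (\<phi> k \<tau>) 0"
    proof
      assume "eq_Delta k (\<phi> k \<tau>) 0"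
      hence "eq_Delta n (pull n \<theta> (\<phi> k \<tau>)) 0" using eq_Delta_pull_zero th(1) by blast
      moreover have "eq_Delta n (\<phi> n \<sigma>) (pull n \<theta> (\<phi> k \<tau>))"
        using sm th \<tau>X unfolding sset_map_Delta_def by blast
      ultimately show False using \<phi>(2) eq_Delta_trans_zero by blast
    qed
    hence "(k, \<tau>) \<in> {(n, \<sigma>). \<sigma> \<in> X n \<and> \<not> eq_Delta n (\<phi> n \<sigma>) 0}" using \<tau>X by simp
    moreover have "(k, act k k id \<tau>) \<in> generated act {(k, \<tau>)}"
      unfolding generated_def using dmap_id by blast
    ultimately have "(k, act k k id \<tau>) \<in> support X act \<phi>"
      unfolding support_def generated_def by blast
    thus "(k, \<tau>) \<in> support X act \<phi>" using ss_act_id[OF ss \<tau>X] by simp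
  qed
  moreover have "finite {t \<in> support X act \<phi>. nondegenerate X act t}"
    using \<phi>(1) by (simp add: fin_supp_cochain_def)
  ultimately show "finite {t. nondegenerate X act t \<and> generated act {s} \<subseteq> generated act {t}}"
    using finite_subset by blast
qed

lemma dir2:
  assumes ss: "simplicial_set X act"
    and nz: "(0::'a::comm_ring_1) \<noteq> 1"
    and lf: "locally_finite X act"
    and \<sigma>X: "\<sigma> \<in> X n"
  shows "\<exists>\<phi> :: nat \<Rightarrow> 'x \<Rightarrow> 'a pol. fin_supp_cochain X act \<phi> \<and> \<not> eq_Delta n (\<phi> n \<sigma>) 0"
proof -
  have act_in: "\<And>m n \<theta> \<sigma>. dmap m n \<theta> \<Longrightarrow> \<sigma> \<in> X n \<Longrightarrow> act n m \<theta> \<sigma> \<in> X m"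
    and act_cong: "\<And>m n \<theta> \<theta>' \<sigma>. (\<forall>i\<le>m. \<theta> i = \<theta>' i) \<Longrightarrow> act n m \<theta> \<sigma> = act n m \<theta>' \<sigma>"
    and act_id: "\<And>n \<sigma>. \<sigma> \<in> X n \<Longrightarrow> act n n id \<sigma> = \<sigma>"
    and act_comp: "\<And>l m n \<theta> \<psi> \<sigma>. dmap m n \<theta> \<Longrightarrow> dmap l m \<psi> \<Longrightarrow> \<sigma> \<in> X n \<Longrightarrow>
        act m l \<psi> (act n m \<theta> \<sigma>) = act n l (\<theta> \<circ> \<psi>) \<sigma>"
    using ss unfolding simplicial_set_def by blast+
  define v0 where "v0 = act n 0 (\<lambda>_. 0) \<sigma>"
  define vt where "vt = (\<lambda>m j \<tau>. act m 0 (\<lambda>_::nat. j) \<tau>)"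
  define T :: "nat \<Rightarrow> 'x \<Rightarrow> 'a pol" where
    "T = (\<lambda>m \<tau>. \<Sum>j \<in> {j. j \<le> m \<and> vt m j \<tau> = v0}. var j)"
  have v0X: "v0 \<in> X 0" unfolding v0_def by (rule act_in[OF dmap_const \<sigma>X]) simp
  have sm: "sset_map_Delta X act T"
    unfolding sset_map_Delta_def
  proof safe
    fix m \<tau> show "vars_le m (T m \<tau>)" unfolding T_def by (intro vars_le_sum vars_le_var) auto
  next
    fix m n' \<theta> \<tau> assume th: "dmap m n' \<theta>" and \<tau>X: "\<tau> \<in> X n'"
    have vtc: "vt m j (act n' m \<theta> \<tau>) = vt n' (\<theta> j) \<tau>" if "j \<le> m" for j
    proof -
      have "vt m j (act n' m \<theta> \<tau>) = act n' 0 (\<theta> \<circ> (\<lambda>_. j)) \<tau>"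
        unfolding vt_def by (rule act_comp[OF th dmap_const[OF that] \<tau>X])
      thus ?thesis by (simp add: vt_def comp_def)
    qed
    have "pull m \<theta> (T n' \<tau>) = (\<Sum>i\<in>{j. j \<le> n' \<and> vt n' j \<tau> = v0}. \<Sum>j \<in> {j. j \<le> m \<and> \<theta> j = i}. var j)"
      by (simp add: T_def pull_subst subst_sum)
    also have "\<dots> = (\<Sum>i\<in>{j. j \<le> n' \<and> vt n' j \<tau> = v0}.
         \<Sum>j \<in> {x. x \<in> {j. j \<le> m \<and> vt n' (\<theta> j) \<tau> = v0} \<and> \<theta> x = i}. var j)"
      by (rule sum.cong) (auto intro!: sum.cong)
    also have "\<dots> = (\<Sum>j \<in> {j. j \<le> m \<and> vt n' (\<theta> j) \<tau> = v0}. var j)"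
      by (rule sum.group) (use th in \<open>auto simp: dmap_def\<close>)
    also have "\<dots> = T m (act n' m \<theta> \<tau>)"
      unfolding T_def by (rule sum.cong) (auto simp: vtc)
    finally have "T m (act n' m \<theta> \<tau>) - pull m \<theta> (T n' \<tau>) = 0 * simplex_rel m" by simp
    thus "eq_Delta m (T m (act n' m \<theta> \<tau>)) (pull m \<theta> (T n' \<tau>))"
      unfolding eq_Delta_def using vars_le_zero by blast
  qed
  have nonzero: "\<not> eq_Delta n (T n \<sigma>) 0"
  proof
    assume "eq_Delta n (T n \<sigma>) 0"
    then obtain r where r: "T n \<sigma> = r * simplex_rel n" by (auto simp: eq_Delta_def)
    define e :: "nat \<Rightarrow> 'a pol" where "e = (\<lambda>i. if i = 0 then 1 else 0)"
    have "subst e (simplex_rel n) = 0"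
      by (simp add: simplex_rel_def subst_minus subst_sum e_def)
    moreover have "subst e (T n \<sigma>) = 1"
    proof -
      have "0 \<in> {j. j \<le> n \<and> vt n j \<sigma> = v0}" by (simp add: vt_def v0_def)
      moreover have "finite {j. j \<le> n \<and> vt n j \<sigma> = v0}" by simp
      ultimately show ?thesis
        by (simp add: T_def subst_sum e_def sum.delta)
    qed
    ultimately have "(1::'a pol) = 0" using r by (simp add: subst_mult)
    hence "Poly_Mapping.lookup (1::'a pol) 0 = Poly_Mapping.lookup 0 0" by simp
    thus False using nz by simp
  qed
  define F where "F = {t. nondegenerate X act t \<and> generated act {(0, v0)} \<subseteq> generated act {t}}"
  have finF: "finite F" using lf v0X unfolding F_def locally_finite_def simplices_def by blast
  define Fun where "Fun = (\<lambda>m k. {\<chi>::nat\<Rightarrow>nat. \<forall>x. (x \<in> {..m} \<longrightarrow> \<chi> x \<in> {..k}) \<and> (x \<notin> {..m} \<longrightarrow> \<chi> x = 0)})"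
  have finFun: "finite (Fun m k)" for m k unfolding Fun_def by (rule finite_set_of_finite_funs) auto
  have "{s \<in> support X act T. nondegenerate X act s} \<subseteq>
        (\<Union>(k, \<tau>) \<in> F. \<Union>m \<in> {..k}. (\<lambda>\<chi>. (m, act k m \<chi> \<tau>)) ` Fun m k)"
  proof safe
    fix m s assume sup: "(m, s) \<in> support X act T" and nds: "nondegenerate X act (m, s)"
    then obtain n' \<theta> \<sigma>' where A: "s = act n' m \<theta> \<sigma>'" "\<sigma>' \<in> X n'" "\<not> eq_Delta n' (T n' \<sigma>') 0" "dmap m n' \<theta>"
      unfolding support_def generated_def by auto
    have "T n' \<sigma>' \<noteq> 0"
    proof
      assume "T n' \<sigma>' = 0"
      hence "eq_Delta n' (T n' \<sigma>') 0" unfolding eq_Delta_def using vars_le_zero by fastforce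
      thus False using A(3) by blast
    qed
    hence "{j. j \<le> n' \<and> vt n' j \<sigma>' = v0} \<noteq> {}"
      unfolding T_def by (metis sum.empty)
    then obtain j where j: "j \<le> n'" "vt n' j \<sigma>' = v0" by blast
    obtain k \<psi> \<tau> where E: "dmap n' k \<psi>" "nondegenerate X act (k, \<tau>)" "\<sigma>' = act k n' \<psi> \<tau>"
      using EZ[OF ss A(2)] by blast
    have \<tau>X: "\<tau> \<in> X k" using E(2) by (simp add: nondegenerate_def)
    have v0e: "v0 = act k 0 (\<psi> \<circ> (\<lambda>_. j)) \<tau>"
      using j E act_comp[OF E(1) dmap_const[OF j(1)] \<tau>X] by (simp add: vt_def)
    have dm0: "dmap 0 k (\<psi> \<circ> (\<lambda>_. j))" using dmap_comp[OF E(1) dmap_const[OF j(1)]] .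
    have "(k, \<tau>) \<in> F"
      unfolding F_def
    proof (safe intro!: E(2))
      fix l x assume "(l, x) \<in> generated act {(0, v0)}"
      then obtain \<eta> where "x = act 0 l \<eta> v0" "dmap l 0 \<eta>" unfolding generated_def by auto
      moreover have "act 0 l \<eta> v0 = act k l ((\<psi> \<circ> (\<lambda>_. j)) \<circ> \<eta>) \<tau>"
        using v0e act_comp[OF dm0 _ \<tau>X] calculation(2) by simp
      ultimately show "(l, x) \<in> generated act {(k, \<tau>)}"
        unfolding generated_def using dmap_comp[OF dm0] by blast
    qed
    have s2: "s = act k m (\<psi> \<circ> \<theta>) \<tau>" using A E act_comp \<tau>X by simp
    have dmk: "dmap m k (\<psi> \<circ> \<theta>)" using dmap_comp E(1) A(4) by blast
    have "m \<le> k"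
    proof (rule ccontr)
      assume "\<not> m \<le> k"
      hence "k < m" by simp
      thus False using nds s2 dmk \<tau>X by (auto simp: nondegenerate_def)
    qed
    define \<chi> where "\<chi> = (\<lambda>i. if i \<le> m then (\<psi> \<circ> \<theta>) i else 0)"
    have "\<chi> \<in> Fun m k" using dmk unfolding Fun_def \<chi>_def dmap_def by auto
    moreover have "s = act k m \<chi> \<tau>" using s2 act_cong[of m "\<psi> \<circ> \<theta>" \<chi>] by (simp add: \<chi>_def)
    ultimately show "(m, s) \<in> (\<Union>(k, \<tau>) \<in> F. \<Union>m \<in> {..k}. (\<lambda>\<chi>. (m, act k m \<chi> \<tau>)) ` Fun m k)"
      using \<open>(k, \<tau>) \<in> F\<close> \<open>m \<le> k\<close> by blast
  qed
  moreover have "finite (\<Union>(k, \<tau>) \<in> F. \<Union>m \<in> {..k}. (\<lambda>\<chi>. (m, act k m \<chi> \<tau>)) ` Fun m k)"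
    using finF finFun by auto
  ultimately have "finite {s \<in> support X act T. nondegenerate X act s}" using finite_subset by blast
  with sm nonzero show ?thesis unfolding fin_supp_cochain_def by blast
qed

theorem proposition9p6:
  fixes X :: "nat \<Rightarrow> 'x set"
    and act :: "nat \<Rightarrow> nat \<Rightarrow> (nat \<Rightarrow> nat) \<Rightarrow> 'x \<Rightarrow> 'x"
  assumes "simplicial_set X act"
    and "(0::'a::comm_ring_1) \<noteq> 1"
  shows "(\<forall>n \<sigma>. \<sigma> \<in> X n \<longrightarrow>
            (\<exists>\<phi> :: nat \<Rightarrow> 'x \<Rightarrow> 'a pol.
               fin_supp_cochain X act \<phi> \<and> \<not> eq_Delta n (\<phi> n \<sigma>) 0))
         \<longleftrightarrow> locally_finite X act"
  using dir1[OF assms(1)] dir2[OF assms] by blast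

end
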